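(* Let $\mathcal{A}$ be a unital C$^*$-algebra with center $Z(\mathcal{A})$. (1) If $L$ is a complete transfer action for a C$^*$-dynamical system $(\mathcal{A},\Gamma^+,\alpha)$, then $(\alpha,L)$ is a complete interaction and $L_x(1)\in Z(\mathcal{A})$ for all $x\in\Gamma^+$. (2) Conversely, if $(\mathcal{V},\mathcal{H})$ is a complete interaction such that $\mathcal{H}_x(1)\in Z(\mathcal{A})$ for all $x\in\Gamma^+$, then each $\mathcal{V}_x$ is multiplicative, i.e. $(\mathcal{A},\Gamma^+,\mathcal{V})$ is a C$^*$-dynamical system, and $\mathcal{H}$ is a complete transfer action for it.
   Context: $\Gamma$ is a totally ordered abelian group with identity $0$ and $\Gamma^+=\{x\in\Gamma:0\le x\}$. An action of $\Gamma^+$ on $\mathcal{A}$ is a map $x\mapsto\mathcal{V}_x$ from $\Gamma^+$ into the bounded positive linear maps $\mathcal{A}\to\mathcal{A}$ with $\mathcal{V}_0=\mathrm{Id}$ and $\mathcal{V}_x\circ\mathcal{V}_y=\mathcal{V}_{x+y}$; a C$^*$-dynamical system $(\mathcal{A},\Gamma^+,\alpha)$ is such an action in which each $\alpha_x$ is a $*$-endomorphism. A transfer action for $(\mathcal{A},\Gamma^+,\alpha)$ is an action $L$ with $L_x(\alpha_x(a)b)=aL_x(b)$ for all $a,b\in\mathcal{A}$, $x\in\Gamma^+$; it is complete if moreover $\alpha_x(L_x(a))=\alpha_x(1)a\alpha_x(1)$ for all $a\in\mathcal{A}$, $x\in\Gamma^+$. An interaction is a pair $(\mathcal{V},\mathcal{H})$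 of actions such that for every $x\in\Gamma^+$: (i) $\mathcal{V}_x\mathcal{H}_x\mathcal{V}_x=\mathcal{V}_x$; (ii) $\mathcal{H}_x\mathcal{V}_x\mathcal{H}_x=\mathcal{H}_x$; (iii) $\mathcal{V}_x(ab)=\mathcal{V}_x(a)\mathcal{V}_x(b)$ whenever $a$ or $b$ belongs to $\mathcal{H}_x(\mathcal{A})$; (iv) $\mathcal{H}_x(ab)=\mathcal{H}_x(a)\mathcal{H}_x(b)$ whenever $a$ or $b$ belongs to $\mathcal{V}_x(\mathcal{A})$. An interaction is complete if moreover $\mathcal{H}_x(\mathcal{V}_x(a))=\mathcal{H}_x(1)a\mathcal{H}_x(1)$ and $\mathcal{V}_x(\mathcal{H}_x(a))=\mathcal{V}_x(1)a\mathcal{V}_x(1)$ for all $x\in\Gamma^+$, $a\in\mathcal{A}$, and $\mathcal{H}_y(1)\mathcal{V}_x(1)=\mathcal{V}_x(1)\mathcal{H}_y(1)$ for all $x,y\in\Gamma^+$. *)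

theory Defs
  imports "HOL-Analysis.Analysis"
begin

text \<open>HOL has no complex vector spaces / C*-algebras, so we axiomatise a unital
C*-algebra as a type class: a real Banach algebra with unit (norm 1 = 1), equipped
with a complex scalar multiplication compatible with the real one and with the norm,
an involution, and the C*-identity.\<close>

class cstar_algebra = real_normed_algebra_1 + banach +
  fixes cstar :: "'a \<Rightarrow> 'a"
    and scaleC :: "complex \<Rightarrow> 'a \<Rightarrow> 'a"
  assumes scaleC_of_real: "scaleC (complex_of_real r) x = scaleR r x"
    and scaleC_add_left: "scaleC (c + d) x = scaleC c x + scaleC d x"
    and scaleC_add_right: "scaleC c (x + y) = scaleC c x + scaleC c y"
    and scaleC_scaleC: "scaleC c (scaleC d x) = scaleC (c * d) x"
    and norm_scaleC: "norm (scaleC c x) = cmod c * norm x"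
    and scaleC_mult_left: "scaleC c x * y = scaleC c (x * y)"
    and scaleC_mult_right: "x * scaleC c y = scaleC c (x * y)"
    and cstar_cstar: "cstar (cstar x) = x"
    and cstar_add: "cstar (x + y) = cstar x + cstar y"
    and cstar_mult: "cstar (x * y) = cstar y * cstar x"
    and cstar_scaleC: "cstar (scaleC c x) = scaleC (cnj c) (cstar x)"
    and cstar_identity: "norm (cstar x * x) = (norm x)\<^sup>2"

definition center :: "'a::cstar_algebra set" where
  "center = {z. \<forall>a. z * a = a * z}"

definition positive_elem :: "'a::cstar_algebra \<Rightarrow> bool" where
  "positive_elem a \<longleftrightarrow> (\<exists>b. a = cstar b * b)"

definition clinear_map :: "('a::cstar_algebra \<Rightarrow> 'a) \<Rightarrow> bool" where
  "clinear_map T \<longleftrightarrow> (\<forall>a b. T (a + b) = T a + T b) \<and> (\<forall>c a. T (scaleC c a) = scaleC c (T a))"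

definition bounded_map :: "('a::cstar_algebra \<Rightarrow> 'a) \<Rightarrow> bool" where
  "bounded_map T \<longleftrightarrow> (\<exists>K. \<forall>a. norm (T a) \<le> norm a * K)"

definition positive_map :: "('a::cstar_algebra \<Rightarrow> 'a) \<Rightarrow> bool" where
  "positive_map T \<longleftrightarrow> (\<forall>a. positive_elem a \<longrightarrow> positive_elem (T a))"

definition bpl_map :: "('a::cstar_algebra \<Rightarrow> 'a) \<Rightarrow> bool" where
  "bpl_map T \<longleftrightarrow> clinear_map T \<and> bounded_map T \<and> positive_map T"

definition star_endo :: "('a::cstar_algebra \<Rightarrow> 'a) \<Rightarrow> bool" where
  "star_endo T \<longleftrightarrow> clinear_map T \<and> (\<forall>a b. T (a * b) = T a * T b) \<and> (\<forall>a. T (cstar a) = cstar (T a))"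

text \<open>Gamma is a type of class linordered_ab_group_add; Gamma^+ = {x. 0 \<le> x}.
An action is a map defined on all of Gamma, only its values on Gamma^+ matter.\<close>

definition action :: "('g::linordered_ab_group_add \<Rightarrow> 'a::cstar_algebra \<Rightarrow> 'a) \<Rightarrow> bool" where
  "action V \<longleftrightarrow> (\<forall>x. 0 \<le> x \<longrightarrow> bpl_map (V x)) \<and> V 0 = id \<and>
     (\<forall>x y. 0 \<le> x \<longrightarrow> 0 \<le> y \<longrightarrow> V x \<circ> V y = V (x + y))"

definition cstar_dyn_sys :: "('g::linordered_ab_group_add \<Rightarrow> 'a::cstar_algebra \<Rightarrow> 'a) \<Rightarrow> bool" where
  "cstar_dyn_sys \<alpha> \<longleftrightarrow> action \<alpha> \<and> (\<forall>x. 0 \<le> x \<longrightarrow> star_endo (\<alpha> x))"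

definition transfer_action ::
  "('g::linordered_ab_group_add \<Rightarrow> 'a::cstar_algebra \<Rightarrow> 'a) \<Rightarrow> ('g \<Rightarrow> 'a \<Rightarrow> 'a) \<Rightarrow> bool" where
  "transfer_action \<alpha> L \<longleftrightarrow> action L \<and>
     (\<forall>x a b. 0 \<le> x \<longrightarrow> L x (\<alpha> x a * b) = a * L x b)"

definition complete_transfer_action ::
  "('g::linordered_ab_group_add \<Rightarrow> 'a::cstar_algebra \<Rightarrow> 'a) \<Rightarrow> ('g \<Rightarrow> 'a \<Rightarrow> 'a) \<Rightarrow> bool" where
  "complete_transfer_action \<alpha> L \<longleftrightarrow> transfer_action \<alpha> L \<and>
     (\<forall>x a. 0 \<le> x \<longrightarrow> \<alpha> x (L x a) = \<alpha> x 1 * a * \<alpha> x 1)"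

definition interaction ::
  "('g::linordered_ab_group_add \<Rightarrow> 'a::cstar_algebra \<Rightarrow> 'a) \<Rightarrow> ('g \<Rightarrow> 'a \<Rightarrow> 'a) \<Rightarrow> bool" where
  "interaction V H \<longleftrightarrow> action V \<and> action H \<and>
     (\<forall>x. 0 \<le> x \<longrightarrow>
        V x \<circ> H x \<circ> V x = V x \<and>
        H x \<circ> V x \<circ> H x = H x \<and>
        (\<forall>a b. (a \<in> range (H x) \<or> b \<in> range (H x)) \<longrightarrow> V x (a * b) = V x a * V x b) \<and>
        (\<forall>a b. (a \<in> range (V x) \<or> b \<in> range (V x)) \<longrightarrow> H x (a * b) = H x a * H x b))"

definition complete_interaction ::
  "('g::linordered_ab_group_add \<Rightarrow> 'a::cstar_algebra \<Rightarrow> 'a) \<Rightarrow> ('g \<Rightarrow> 'a \<Rightarrow> 'a) \<Rightarrow> bool" where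
  "complete_interaction V H \<longleftrightarrow> interaction V H \<and>
     (\<forall>x a. 0 \<le> x \<longrightarrow> H x (V x a) = H x 1 * a * H x 1 \<and> V x (H x a) = V x 1 * a * V x 1) \<and>
     (\<forall>x y. 0 \<le> x \<longrightarrow> 0 \<le> y \<longrightarrow> H y 1 * V x 1 = V x 1 * H y 1)"

end

theory Submission imports Defs "HOL-Computational_Algebra.Formal_Power_Series"
begin


lemma scaleC_one': "scaleC 1 (x::'a::cstar_algebra) = x"
  using scaleC_of_real[of 1 x] by simp

lemma scaleC_neg_one: "scaleC (-1) (x::'a::cstar_algebra) = - x"
  using scaleC_of_real[of "-1" x] by simp

lemma scaleC_zero_right: "scaleC c (0::'a::cstar_algebra) = 0"
  using scaleC_add_right[of c "0::'a" 0] by simp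

lemma scaleC_minus_right: "scaleC c (- x) = - scaleC c (x::'a::cstar_algebra)"
proof -
  have "scaleC c x + scaleC c (- x) = scaleC c (x + - x)" by (rule scaleC_add_right[symmetric])
  also have "\<dots> = 0" by (simp add: scaleC_zero_right)
  finally have "scaleC c x + scaleC c (- x) = 0" .
  from minus_unique[OF this] show ?thesis by simp
qed

lemma scaleC_diff_right: "scaleC c (x - y) = scaleC c x - scaleC c (y::'a::cstar_algebra)"
  using scaleC_add_right[of c x "-y"] scaleC_minus_right[of c y] by simp

lemma scaleC_minus_left: "scaleC (-c) x = - scaleC c (x::'a::cstar_algebra)"
  using scaleC_scaleC[of "-1" c x] scaleC_neg_one[of "scaleC c x"] by simp

lemma cstar_zero: "cstar (0::'a::cstar_algebra) = 0"
  using cstar_add[of "0::'a" 0] by simp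

lemma cstar_scaleR: "cstar (scaleR r (x::'a::cstar_algebra)) = scaleR r (cstar x)"
  by (metis scaleC_of_real cstar_scaleC complex_cnj_complex_of_real)

lemma norm_cstar_le: "norm (x::'a::cstar_algebra) \<le> norm (cstar x)"
proof (cases "x = 0")
  case True thus ?thesis by simp
next
  case False
  have "(norm x)^2 \<le> norm (cstar x) * norm x"
    using cstar_identity[of x] norm_mult_ineq[of "cstar x" x] by simp
  hence "norm x * norm x \<le> norm (cstar x) * norm x" by (simp add: power2_eq_square)
  thus ?thesis using False by simp
qed

lemma norm_cstar: "norm (cstar (x::'a::cstar_algebra)) = norm x"
  using norm_cstar_le[of x] norm_cstar_le[of "cstar x"] cstar_cstar[of x] by simp

lemma bounded_linear_cstar: "bounded_linear (cstar :: 'a::cstar_algebra \<Rightarrow> 'a)"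
  by (rule bounded_linear_intro[where K=1]) (simp_all add: cstar_add cstar_scaleR norm_cstar)

lemma cstar_one: "cstar (1::'a::cstar_algebra) = 1"
  by (metis cstar_cstar cstar_mult mult_1_left mult_1_right)

lemma cstar_diff: "cstar (x - y) = cstar x - cstar (y::'a::cstar_algebra)"
  using linear_diff[OF bounded_linear.linear[OF bounded_linear_cstar]] by blast

lemma cstar_minus: "cstar (- y) = - cstar (y::'a::cstar_algebra)"
  using linear_neg[OF bounded_linear.linear[OF bounded_linear_cstar]] by blast

lemma cstar_power: "cstar h = h \<Longrightarrow> cstar (h ^ n) = (h::'a::cstar_algebra) ^ n"
  by (induction n) (simp_all add: cstar_one cstar_mult power_commutes)

lemma half_gchoose_le: "\<bar>((1/2::real) gchoose n)\<bar> \<le> 1"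
proof (induction n)
  case 0 thus ?case by simp
next
  case (Suc k)
  have e: "(1/2::real) * ((1/2) gchoose k) = of_nat k * ((1/2) gchoose k) + of_nat (Suc k) * ((1/2) gchoose (Suc k))"
    by (rule gbinomial_mult_1)
  hence "((1/2::real) gchoose Suc k) = (1/2 - of_nat k) * ((1/2) gchoose k) / of_nat (Suc k)"
    by (simp add: field_simps del: of_nat_Suc)
  also have "\<bar>\<dots>\<bar> = \<bar>1/2 - of_nat k\<bar> * \<bar>(1/2) gchoose k\<bar> / of_nat (Suc k)"
    by (simp add: abs_mult)
  also have "\<dots> \<le> 1"
  proof -
    have "\<bar>1/2 - real k\<bar> \<le> real (Suc k)" by simp
    hence "\<bar>1/2 - real k\<bar> * \<bar>(1/2) gchoose k\<bar> \<le> real (Suc k) * 1"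
      using Suc.IH by (intro mult_mono) auto
    thus ?thesis by simp
  qed
  finally show ?case .
qed


lemma one_gchoose: "((1::real) gchoose k) = (if k = 0 then 1 else if k = 1 then 1 else 0)"
proof -
  have "((1::real) gchoose k) = of_nat (1 choose k)"
    using binomial_gbinomial[of 1 k, where 'a=real] by simp
  thus ?thesis by (cases k) (auto simp: binomial_eq_0)
qed

lemma sqrt_one_plus:
  fixes h :: "'a::cstar_algebra"
  assumes sa: "cstar h = h" and nh: "norm h < 1"
  shows "\<exists>s. cstar s = s \<and> s * s = 1 + h"
proof -
  define c where "c n = ((1/2::real) gchoose n)" for n
  define f where "f n = scaleR (c n) (h ^ n)" for n
  have nf: "norm (f n) \<le> norm h ^ n" for n
  proof -
    have "norm (f n) = \<bar>c n\<bar> * norm (h ^ n)" by (simp add: f_def)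
    also have "\<dots> \<le> 1 * norm h ^ n"
      using half_gchoose_le[of n] norm_power_ineq[of h n] unfolding c_def
      by (intro mult_mono) auto
    finally show ?thesis by simp
  qed
  have sumn: "summable (\<lambda>n. norm (f n))"
    by (rule summable_comparison_test[OF _ summable_geometric[of "norm h"]])
       (use nf nh in auto)
  hence sumf: "summable f" by (rule summable_norm_cancel)
  define s where "s = suminf f"
  have "cstar s = (\<Sum>n. cstar (f n))"
    unfolding s_def by (rule bounded_linear.suminf[OF bounded_linear_cstar sumf])
  also have "\<dots> = s" unfolding s_def f_def
    by (simp add: cstar_scaleR cstar_power[OF sa])
  finally have cs: "cstar s = s" .
  have "(\<lambda>k. \<Sum>i\<le>k. f i * f (k - i)) sums (s * s)"
    unfolding s_def by (rule Cauchy_product_sums[OF sumn sumn])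
  moreover have "(\<Sum>i\<le>k. f i * f (k - i)) = scaleR ((1::real) gchoose k) (h ^ k)" for k
  proof -
    have "(\<Sum>i\<le>k. f i * f (k - i)) = (\<Sum>i\<le>k. scaleR (c i * c (k - i)) (h ^ k))"
    proof (rule sum.cong[OF refl])
      fix i assume "i \<in> {..k}"
      hence "h ^ i * h ^ (k - i) = h ^ k" by (simp add: power_add[symmetric])
      thus "f i * f (k - i) = scaleR (c i * c (k - i)) (h ^ k)"
        by (simp add: f_def)
    qed
    also have "\<dots> = scaleR (\<Sum>i\<le>k. c i * c (k - i)) (h ^ k)"
      by (simp add: scaleR_sum_left)
    also have "(\<Sum>i\<le>k. c i * c (k - i)) = (1::real) gchoose k"
      using gbinomial_Vandermonde[of "1/2::real" "1/2" k] unfolding c_def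
      by (simp add: atLeast0AtMost)
    finally show ?thesis .
  qed
  ultimately have "(\<lambda>k. scaleR ((1::real) gchoose k) (h ^ k)) sums (s * s)" by simp
  moreover have "(\<lambda>k. scaleR ((1::real) gchoose k) (h ^ k)) sums (1 + h)"
  proof -
    have "(\<lambda>k. scaleR ((1::real) gchoose k) (h ^ k)) sums (\<Sum>k\<in>{0,1}. scaleR ((1::real) gchoose k) (h ^ k))"
      by (rule sums_finite) (auto simp: one_gchoose)
    thus ?thesis by (simp add: one_gchoose)
  qed
  ultimately have "s * s = 1 + h" by (rule sums_unique2)
  with cs show ?thesis by blast
qed


lemma pos_sa: "positive_elem p \<Longrightarrow> cstar p = p"
  unfolding positive_elem_def by (auto simp: cstar_mult cstar_cstar)

lemma sa_diff_pos:
  fixes h :: "'a::cstar_algebra"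
  assumes sa: "cstar h = h"
  shows "\<exists>P Q. positive_elem P \<and> positive_elem Q \<and> h = P - Q"
proof -
  define r where "r = norm h + 1"
  have r: "r > 0" unfolding r_def by (simp add: add_nonneg_pos)
  define h' where "h' = scaleR (1/r) h"
  have sa': "cstar h' = h'" unfolding h'_def by (simp add: cstar_scaleR sa)
  have "norm h' = norm h / r" unfolding h'_def using r by simp
  also have "\<dots> < 1" using r unfolding r_def by simp
  finally obtain s where s: "cstar s = s" "s * s = 1 + h'" using sqrt_one_plus[OF sa'] by blast
  define t where "t = scaleR (sqrt r) s"
  have "cstar t * t = scaleR (sqrt r * sqrt r) (s * s)"
    unfolding t_def by (simp add: cstar_scaleR s(1))
  also have "\<dots> = scaleR r 1 + h"
    using r by (simp add: s(2) h'_def scaleR_add_right)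
  finally have P: "positive_elem (scaleR r 1 + h)" unfolding positive_elem_def by metis
  define u where "u = scaleR (sqrt r) (1::'a)"
  have "cstar u * u = scaleR r 1"
    unfolding u_def using r by (simp add: cstar_scaleR cstar_one)
  hence Q: "positive_elem (scaleR r (1::'a))" unfolding positive_elem_def by metis
  have "h = (scaleR r 1 + h) - scaleR r 1" by simp
  with P Q show ?thesis by blast
qed

lemma bpl_star:
  fixes T :: "'a::cstar_algebra \<Rightarrow> 'a"
  assumes lin: "clinear_map T" and pos: "positive_map T"
  shows "T (cstar a) = cstar (T a)"
proof -
  have add: "T (x + y) = T x + T y" for x y using lin unfolding clinear_map_def by blast
  have sc: "T (scaleC c x) = scaleC c (T x)" for c x using lin unfolding clinear_map_def by blast
  have diff: "T (x - y) = T x - T y" for x y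
    using add[of "x - y" y] by (simp add: eq_diff_eq)
  have saT: "cstar (T h) = T h" if hsa: "cstar h = h" for h
  proof -
    obtain P Q where PQ: "positive_elem P" "positive_elem Q" "h = P - Q"
      using sa_diff_pos[OF hsa] by blast
    have "positive_elem (T P)" "positive_elem (T Q)"
      using pos PQ unfolding positive_map_def by auto
    thus ?thesis using PQ by (simp add: diff cstar_diff pos_sa)
  qed
  define X where "X = cstar (T a)"
  define Y where "Y = cstar (T (cstar a))"
  define Z where "Z = T (cstar a)"
  define W where "W = T a"
  have "cstar (a + cstar a) = a + cstar a" by (simp add: cstar_add cstar_cstar add.commute)
  hence e1: "X + Y = W + Z" using saT[of "a + cstar a"]
    unfolding X_def Y_def Z_def W_def by (simp add: add cstar_add)
  have cw: "cstar (scaleC \<i> (a - cstar a)) = scaleC \<i> (a - cstar a)"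
  proof -
    have "cstar (scaleC \<i> (a - cstar a)) = scaleC (- \<i>) (cstar a - a)"
      by (simp add: cstar_scaleC cstar_diff cstar_cstar)
    also have "\<dots> = scaleC \<i> (a - cstar a)"
      by (simp add: scaleC_minus_left scaleC_diff_right)
    finally show ?thesis .
  qed
  have "cstar (T (scaleC \<i> (a - cstar a))) = T (scaleC \<i> (a - cstar a))" by (rule saT[OF cw])
  hence "scaleC (- \<i>) (X - Y) = scaleC \<i> (W - Z)"
    unfolding X_def Y_def Z_def W_def by (simp add: sc diff cstar_scaleC cstar_diff)
  hence "scaleC \<i> (scaleC (- \<i>) (X - Y)) = scaleC \<i> (scaleC \<i> (W - Z))" by simp
  hence e2: "X - Y = - (W - Z)" by (simp add: scaleC_scaleC scaleC_one' scaleC_neg_one)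
  have "X + X = (X + Y) + (X - Y)" by (simp add: algebra_simps)
  also have "\<dots> = Z + Z" using e1 e2 by (simp add: algebra_simps)
  finally have "X + X = Z + Z" .
  hence "scaleR 2 X = scaleR 2 Z" by (simp add: scaleR_2)
  hence "X = Z" by simp
  thus ?thesis unfolding X_def Z_def by simp
qed


lemma part1:
  fixes \<alpha> L :: "'g::linordered_ab_group_add \<Rightarrow> 'a::cstar_algebra \<Rightarrow> 'a"
  assumes ds: "cstar_dyn_sys \<alpha>" and ct: "complete_transfer_action \<alpha> L"
  shows "complete_interaction \<alpha> L \<and> (\<forall>x. 0 \<le> x \<longrightarrow> L x 1 \<in> center)"
proof -
  have actA: "action \<alpha>" and actL: "action L"
    using ds ct unfolding cstar_dyn_sys_def complete_transfer_action_def transfer_action_def by auto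
  have se: "star_endo (\<alpha> x)" if "0 \<le> x" for x using ds that unfolding cstar_dyn_sys_def by auto
  have amul: "\<alpha> x (a * b) = \<alpha> x a * \<alpha> x b" if "0 \<le> x" for x a b
    using se[OF that] unfolding star_endo_def by auto
  have astar: "\<alpha> x (cstar a) = cstar (\<alpha> x a)" if "0 \<le> x" for x a
    using se[OF that] unfolding star_endo_def by auto
  have tr: "L x (\<alpha> x a * b) = a * L x b" if "0 \<le> x" for x a b
    using ct that unfolding complete_transfer_action_def transfer_action_def by auto
  have cpl: "\<alpha> x (L x a) = \<alpha> x 1 * a * \<alpha> x 1" if "0 \<le> x" for x a
    using ct that unfolding complete_transfer_action_def by auto
  have Lstar: "L x (cstar a) = cstar (L x a)" if "0 \<le> x" for x a
  proof -
    have "bpl_map (L x)" using actL that unfolding action_def by blast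
    thus ?thesis using bpl_star[of "L x" a] unfolding bpl_map_def by blast
  qed
  have R: "L x (b * \<alpha> x c) = L x b * c" if x: "0 \<le> x" for x b c
  proof -
    have "L x (b * \<alpha> x c) = cstar (cstar (L x (b * \<alpha> x c)))" by (simp add: cstar_cstar)
    also have "cstar (L x (b * \<alpha> x c)) = L x (cstar (b * \<alpha> x c))" by (simp add: Lstar[OF x])
    also have "\<dots> = L x (\<alpha> x (cstar c) * cstar b)" by (simp add: cstar_mult astar[OF x])
    also have "\<dots> = cstar c * L x (cstar b)" by (simp add: tr[OF x])
    also have "cstar (cstar c * L x (cstar b)) = L x b * c"
      by (simp add: cstar_mult Lstar[OF x] cstar_cstar)
    finally show ?thesis .
  qed
  have La: "L x (\<alpha> x a) = a * L x 1" if x: "0 \<le> x" for x a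
    using tr[OF x, of a 1] by simp
  have cen: "L x 1 * a = a * L x 1" if x: "0 \<le> x" for x a
    using R[OF x, of 1 a] La[OF x, of a] by simp
  have p2: "\<alpha> x 1 * \<alpha> x 1 = \<alpha> x 1" if x: "0 \<le> x" for x
    using amul[OF x, of 1 1] by simp
  have lL: "L x 1 * L x a = L x a" if x: "0 \<le> x" for x a
  proof -
    have "L x 1 * L x a = L x (\<alpha> x (L x 1) * a)" by (simp add: tr[OF x])
    also have "\<alpha> x (L x 1) = \<alpha> x 1" by (simp add: cpl[OF x] p2[OF x])
    also have "L x (\<alpha> x 1 * a) = L x a" using tr[OF x, of 1 a] by simp
    finally show ?thesis .
  qed
  have Ll: "L x a * L x 1 = L x a" if x: "0 \<le> x" for x a
    using lL[OF x, of a] cen[OF x, of "L x a"] by simp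
  have inter: "interaction \<alpha> L"
    unfolding interaction_def
  proof (intro conjI allI impI actA actL)
    fix x :: 'g assume x: "0 \<le> x"
    show "\<alpha> x \<circ> L x \<circ> \<alpha> x = \<alpha> x"
    proof
      fix a
      have "\<alpha> x (L x (\<alpha> x a)) = \<alpha> x 1 * \<alpha> x a * \<alpha> x 1" by (simp add: cpl[OF x])
      also have "\<dots> = \<alpha> x a" by (simp add: amul[OF x, symmetric])
      finally show "(\<alpha> x \<circ> L x \<circ> \<alpha> x) a = \<alpha> x a" by simp
    qed
    show "L x \<circ> \<alpha> x \<circ> L x = L x"
    proof
      fix a
      show "(L x \<circ> \<alpha> x \<circ> L x) a = L x a" by (simp add: La[OF x] Ll[OF x])
    qed
    show "\<alpha> x (a * b) = \<alpha> x a * \<alpha> x b" if "a \<in> range (L x) \<or> b \<in> range (L x)" for a b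
      by (rule amul[OF x])
    show "L x (a * b) = L x a * L x b" if ab: "a \<in> range (\<alpha> x) \<or> b \<in> range (\<alpha> x)" for a b
      using ab
      proof
        assume "a \<in> range (\<alpha> x)"
        then obtain c where "a = \<alpha> x c" by blast
        thus ?thesis by (simp add: tr[OF x] La[OF x] mult.assoc lL[OF x])
      next
        assume "b \<in> range (\<alpha> x)"
        then obtain c where c: "b = \<alpha> x c" by blast
        have "L x a * L x b = L x a * (L x 1 * c)" using cen[OF x, of c] by (simp add: c La[OF x])
        also have "\<dots> = L x a * c" by (simp add: mult.assoc[symmetric] Ll[OF x])
        finally show ?thesis by (simp add: c R[OF x])
      qed
  qed
  show ?thesis
    unfolding complete_interaction_def center_def
  proof (intro conjI allI impI inter)
    fix x a :: _ assume x: "0 \<le> (x::'g)"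
    have "L x 1 * a * L x 1 = a * L x 1 * L x 1" by (simp only: cen[OF x, of a])
    also have "\<dots> = a * (L x 1 * L x 1)" by (simp only: mult.assoc)
    finally have "L x 1 * a * L x 1 = a * (L x 1 * L x 1)" .
    thus "L x (\<alpha> x a) = L x 1 * a * L x 1" by (simp add: La[OF x] lL[OF x])
    show "\<alpha> x (L x a) = \<alpha> x 1 * a * \<alpha> x 1" by (rule cpl[OF x])
  next
    fix x y :: 'g assume "0 \<le> x" "0 \<le> y"
    thus "L y 1 * \<alpha> x 1 = \<alpha> x 1 * L y 1" using cen[of y "\<alpha> x 1"] by simp
  next
    fix x :: 'g assume "0 \<le> x"
    thus "L x 1 \<in> {z. \<forall>a. z * a = a * z}" using cen[of x] by simp
  qed
qed


lemma part2:
  fixes V H :: "'g::linordered_ab_group_add \<Rightarrow> 'a::cstar_algebra \<Rightarrow> 'a"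
  assumes ci: "complete_interaction V H" and hc: "\<forall>x. 0 \<le> x \<longrightarrow> H x 1 \<in> center"
  shows "(\<forall>x. 0 \<le> x \<longrightarrow> (\<forall>a b. V x (a * b) = V x a * V x b)) \<and>
         cstar_dyn_sys V \<and> complete_transfer_action V H"
proof -
  have actV: "action V" and actH: "action H"
    using ci unfolding complete_interaction_def interaction_def by auto
  have I4: "\<forall>x. 0 \<le> x \<longrightarrow>
        V x \<circ> H x \<circ> V x = V x \<and>
        H x \<circ> V x \<circ> H x = H x \<and>
        (\<forall>a b. (a \<in> range (H x) \<or> b \<in> range (H x)) \<longrightarrow> V x (a * b) = V x a * V x b) \<and>
        (\<forall>a b. (a \<in> range (V x) \<or> b \<in> range (V x)) \<longrightarrow> H x (a * b) = H x a * H x b)"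
    using ci unfolding complete_interaction_def interaction_def by (elim conjE)
  have C2: "\<forall>x a. 0 \<le> x \<longrightarrow> H x (V x a) = H x 1 * a * H x 1 \<and> V x (H x a) = V x 1 * a * V x 1"
    using ci unfolding complete_interaction_def by (elim conjE)
  have VHV: "V x (H x (V x a)) = V x a" if x: "0 \<le> x" for x a
    using fun_cong[OF conjunct1[OF I4[rule_format, OF x]], of a] by simp
  have HVH: "H x (V x (H x a)) = H x a" if x: "0 \<le> x" for x a
    using fun_cong[OF conjunct1[OF conjunct2[OF I4[rule_format, OF x]]], of a] by simp
  have Vm: "V x (a * b) = V x a * V x b" if x: "0 \<le> x" "a \<in> range (H x)" for x a b
    using conjunct1[OF conjunct2[OF conjunct2[OF I4[rule_format, OF x(1)]]]] x(2) by simp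
  have Hm: "H x (a * b) = H x a * H x b" if x: "0 \<le> x" "a \<in> range (V x)" for x a b
    using conjunct2[OF conjunct2[OF conjunct2[OF I4[rule_format, OF x(1)]]]] x(2) by simp
  have HV: "H x (V x a) = H x 1 * a * H x 1" if x: "0 \<le> x" for x a
    using C2[rule_format, OF x] by (rule conjunct1)
  have VH: "V x (H x a) = V x 1 * a * V x 1" if x: "0 \<le> x" for x a
    using C2[rule_format, OF x] by (rule conjunct2)
  have cen: "H x 1 * a = a * H x 1" if x: "0 \<le> x" for x a
    using hc x unfolding center_def by simp
  have HV': "H x (V x a) = H x 1 * H x 1 * a" if x: "0 \<le> x" for x a
  proof -
    have "H x (V x a) = H x 1 * (a * H x 1)" by (simp add: HV[OF x] mult.assoc)
    also have "a * H x 1 = H x 1 * a" by (simp only: cen[OF x])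
    finally show ?thesis by (simp add: mult.assoc)
  qed
  have q3: "H x 1 * H x 1 * H x a = H x a" if x: "0 \<le> x" for x a
    using HVH[OF x, of a] HV'[OF x, of "H x a"] by simp
  have mul: "V x (a * b) = V x a * V x b" if x: "0 \<le> x" for x a b
  proof -
    let ?q = "H x 1 * H x 1"
    have qa: "V x (?q * c) = V x c" for c using VHV[OF x, of c] HV'[OF x, of c] by simp
    have qq: "?q * ?q = ?q" using q3[OF x, of 1] by (simp add: mult.assoc)
    have qc: "c * ?q = ?q * c" for c
    proof -
      have "c * ?q = (c * H x 1) * H x 1" by (simp only: mult.assoc)
      also have "\<dots> = (H x 1 * c) * H x 1" by (simp only: cen[OF x, of c])
      also have "\<dots> = H x 1 * (c * H x 1)" by (simp only: mult.assoc)
      also have "\<dots> = H x 1 * (H x 1 * c)" by (simp only: cen[OF x, of c])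
      also have "\<dots> = ?q * c" by (simp only: mult.assoc)
      finally show ?thesis .
    qed
    have "(?q * a) * (?q * b) = ?q * (a * ?q) * b" by (simp add: mult.assoc)
    also have "a * ?q = ?q * a" by (rule qc)
    also have "?q * (?q * a) * b = ?q * (a * b)" using qq by (simp add: mult.assoc[symmetric])
    finally have e: "(?q * a) * (?q * b) = ?q * (a * b)" .
    have "V x (a * b) = V x ((?q * a) * (?q * b))" by (simp only: e qa)
    also have "\<dots> = V x (?q * a) * V x (?q * b)"
    proof (rule Vm[OF x])
      have "H x (V x a) \<in> range (H x)" by (rule rangeI)
      thus "?q * a \<in> range (H x)" by (simp only: HV'[OF x])
    qed
    also have "\<dots> = V x a * V x b" by (simp only: qa)
    finally show ?thesis .
  qed
  have bplV: "bpl_map (V x)" if "0 \<le> x" for x using actV that unfolding action_def by blast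
  have ds: "cstar_dyn_sys V"
    unfolding cstar_dyn_sys_def star_endo_def
  proof (intro conjI allI impI actV)
    fix x :: 'g assume x: "0 \<le> x"
    show "clinear_map (V x)" using bplV[OF x] unfolding bpl_map_def by blast
    show "V x (a * b) = V x a * V x b" for a b by (rule mul[OF x])
    show "V x (cstar a) = cstar (V x a)" for a
      using bplV[OF x] bpl_star[of "V x" a] unfolding bpl_map_def by blast
  qed
  have cta: "complete_transfer_action V H"
    unfolding complete_transfer_action_def transfer_action_def
  proof (intro conjI allI impI actH)
    fix x :: 'g and a b assume x: "0 \<le> x"
    let ?q = "H x 1 * H x 1"
    have qc: "c * ?q = ?q * c" for c
    proof -
      have "c * ?q = (c * H x 1) * H x 1" by (simp only: mult.assoc)
      also have "\<dots> = (H x 1 * c) * H x 1" by (simp only: cen[OF x, of c])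
      also have "\<dots> = H x 1 * (c * H x 1)" by (simp only: mult.assoc)
      also have "\<dots> = H x 1 * (H x 1 * c)" by (simp only: cen[OF x, of c])
      also have "\<dots> = ?q * c" by (simp only: mult.assoc)
      finally show ?thesis .
    qed
    have "H x (V x a * b) = H x (V x a) * H x b" by (rule Hm[OF x]) simp
    also have "\<dots> = ?q * a * H x b" by (simp only: HV'[OF x])
    also have "\<dots> = a * ?q * H x b" by (simp only: qc)
    also have "\<dots> = a * (H x 1 * H x 1 * H x b)" by (simp only: mult.assoc)
    also have "\<dots> = a * H x b" by (simp only: q3[OF x])
    finally show "H x (V x a * b) = a * H x b" .
    show "V x (H x a) = V x 1 * a * V x 1" by (rule VH[OF x])
  qed
  show ?thesis using mul ds cta by blast
qed

theorem proposition3p4: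
  shows "(\<forall>(\<alpha>::'g::linordered_ab_group_add \<Rightarrow> 'a::cstar_algebra \<Rightarrow> 'a) L.
            cstar_dyn_sys \<alpha> \<and> complete_transfer_action \<alpha> L \<longrightarrow>
              complete_interaction \<alpha> L \<and> (\<forall>x. 0 \<le> x \<longrightarrow> L x 1 \<in> center))
       \<and> (\<forall>(V::'g \<Rightarrow> 'a \<Rightarrow> 'a) H.
            complete_interaction V H \<and> (\<forall>x. 0 \<le> x \<longrightarrow> H x 1 \<in> center) \<longrightarrow>
              (\<forall>x. 0 \<le> x \<longrightarrow> (\<forall>a b. V x (a * b) = V x a * V x b)) \<and>
              cstar_dyn_sys V \<and> complete_transfer_action V H)"
  apply (rule conjI)
   apply (intro allI impI, elim conjE, erule (1) part1)
  apply (intro allI impI, elim conjE, erule (1) part2)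
  done

end
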